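(* Let $Y_1,\dots,Y_m$ be independent $\mathbb{Z}^d$-valued random vectors, $W:=\sum_{i=1}^mY_i$, $u_i:=\min_{1\le j\le d}\{1-d_{TV}(\mathcal{L}(Y_i),\mathcal{L}(Y_i+e^{(j)}))\}$ and $s_m:=\sum_{i=1}^mu_i>0$. Then there is a universal constant $C$ such that $\max_{1\le j\le d}d_{TV}(\mathcal{L}(W),\mathcal{L}(W+e^{(j)}))\le C\,s_m^{-1/2}$.
   Context: $e^{(j)}$ is the $j$-th coordinate vector of $\mathbb{Z}^d$; $d_{TV}$ is total variation distance. *)

theory Defs
  imports "HOL-Probability.Probability"
begin

text \<open>Vectors of Z^d are represented as functions nat => int that vanish
  at all coordinates k >= d.\<close>
definition zvecs :: "nat \<Rightarrow> (nat \<Rightarrow> int) set" where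
  "zvecs d = {x. \<forall>k\<ge>d. x k = 0}"

definition unitvec :: "nat \<Rightarrow> nat \<Rightarrow> int" where
  "unitvec j = (\<lambda>k. if k = j then 1 else 0)"

definition vadd :: "(nat \<Rightarrow> int) \<Rightarrow> (nat \<Rightarrow> int) \<Rightarrow> nat \<Rightarrow> int" where
  "vadd x y = (\<lambda>k. x k + y k)"

definition dTV :: "'a pmf \<Rightarrow> 'a pmf \<Rightarrow> real" where
  "dTV p q = (SUP A. \<bar>measure_pmf.prob p A - measure_pmf.prob q A\<bar>)"

definition shift_law :: "nat \<Rightarrow> (nat \<Rightarrow> int) pmf \<Rightarrow> (nat \<Rightarrow> int) pmf" where
  "shift_law j p = map_pmf (\<lambda>x. vadd x (unitvec j)) p"

definition sum_law :: "nat \<Rightarrow> (nat \<Rightarrow> (nat \<Rightarrow> int) pmf) \<Rightarrow> (nat \<Rightarrow> int) pmf" where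
  "sum_law m p = map_pmf (\<lambda>y k. \<Sum>i<m. y i k) (Pi_pmf {..<m} (\<lambda>_. 0) p)"

end

theory Submission
  imports Defs
begin


lemma stein_part1:
  fixes g :: "nat \<Rightarrow> real"
  shows "(\<Sum>k\<le>Suc n. real (Suc n choose k) * (real (Suc n) - real k) * g k)
       = real (Suc n) * (\<Sum>k\<le>n. real (n choose k) * g k)"
proof -
  have "(\<Sum>k\<le>Suc n. real (Suc n choose k) * (real (Suc n) - real k) * g k)
      = (\<Sum>k\<le>Suc n. real (Suc n) * (real (n choose k) * g k))"
  proof (rule sum.cong[OF refl])
    fix k assume "k \<in> {..Suc n}"
    hence h1: "real (Suc n) - real k = real (Suc n - k)" by auto
    have h2: "real (Suc n - k) * real (Suc n choose k) = real (Suc n) * real (n choose k)"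
      using arg_cong[OF binomial_absorb_comp[of "Suc n" k], of real] by (simp only: of_nat_mult diff_Suc_1)
    have eq: "real (Suc n choose k) * (real (Suc n) - real k) = real (Suc n) * real (n choose k)"
      by (subst h1, subst mult.commute, rule h2)
    show "real (Suc n choose k) * (real (Suc n) - real k) * g k = real (Suc n) * (real (n choose k) * g k)"
      by (subst eq) (simp only: mult.assoc)
  qed
  also have "\<dots> = real (Suc n) * (\<Sum>k\<le>Suc n. real (n choose k) * g k)"
    by (rule sum_distrib_left[symmetric])
  also have "(\<Sum>k\<le>Suc n. real (n choose k) * g k) = (\<Sum>k\<le>n. real (n choose k) * g k)"
    by simp
  finally show ?thesis .
qed

lemma stein_part2:
  fixes g :: "nat \<Rightarrow> real"
  shows "(\<Sum>k\<le>Suc n. real (Suc n choose k) * real k * g k)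
       = real (Suc n) * (\<Sum>k\<le>n. real (n choose k) * g (Suc k))"
proof -
  have "(\<Sum>k\<le>Suc n. real (Suc n choose k) * real k * g k)
      = (\<Sum>k\<le>n. real (Suc n choose Suc k) * real (Suc k) * g (Suc k))"
    by (subst sum.atMost_Suc_shift) simp
  also have "\<dots> = (\<Sum>k\<le>n. real (Suc n) * (real (n choose k) * g (Suc k)))"
  proof (rule sum.cong[OF refl])
    fix k
    have "real (Suc k) * real (Suc n choose Suc k) = real (Suc n) * real (n choose k)"
      using arg_cong[OF Suc_times_binomial[of k n], of real] by (simp only: of_nat_mult)
    thus "real (Suc n choose Suc k) * real (Suc k) * g (Suc k) = real (Suc n) * (real (n choose k) * g (Suc k))"
      by (simp add: algebra_simps)
  qed
  also have "\<dots> = real (Suc n) * (\<Sum>k\<le>n. real (n choose k) * g (Suc k))"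
    by (simp add: sum_distrib_left)
  finally show ?thesis .
qed

lemma stein_sum:
  fixes g :: "nat \<Rightarrow> real"
  shows "(\<Sum>k\<le>Suc n. real (Suc n choose k) * (real (Suc n) - 2 * real k) * g k)
       = real (Suc n) * (\<Sum>k\<le>n. real (n choose k) * (g k - g (Suc k)))"
proof -
  have "(\<Sum>k\<le>Suc n. real (Suc n choose k) * (real (Suc n) - 2 * real k) * g k)
     = (\<Sum>k\<le>Suc n. real (Suc n choose k) * (real (Suc n) - real k) * g k)
       - (\<Sum>k\<le>Suc n. real (Suc n choose k) * real k * g k)"
    by (simp add: sum_subtractf[symmetric] algebra_simps del: sum.atMost_Suc)
  also have "\<dots> = real (Suc n) * (\<Sum>k\<le>n. real (n choose k) * g k) - real (Suc n) * (\<Sum>k\<le>n. real (n choose k) * g (Suc k))"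
    by (simp only: stein_part1 stein_part2)
  also have "\<dots> = real (Suc n) * (\<Sum>k\<le>n. real (n choose k) * (g k - g (Suc k)))"
    by (simp add: sum_subtractf algebra_simps)
  finally show ?thesis .
qed

lemma kernel_sum_bound:
  fixes g :: "nat \<Rightarrow> real"
  assumes g: "\<And>k. \<bar>g k\<bar> \<le> 1"
  shows "\<bar>(\<Sum>k\<le>n. real (n choose k) * (g k - g (Suc k)))\<bar> \<le> 2 * 2 ^ n / sqrt (real (Suc n))"
proof -
  define N where "N = Suc n"
  have Npos: "real N > 0" by (simp add: N_def)
  define c where "c = (\<lambda>k. real (N choose k))"
  have c0: "c k \<ge> 0" for k by (simp add: c_def)
  have sq: "(\<Sum>k\<le>N. c k * (real N - 2 * real k)^2) = real N * 2 ^ N"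
  proof -
    have "(\<Sum>k\<le>N. c k * (real N - 2 * real k)^2) = (\<Sum>k\<le>N. c k * (real N - 2 * real k) * (real N - 2 * real k))"
      by (simp add: power2_eq_square algebra_simps)
    also have "\<dots> = real N * (\<Sum>k\<le>n. real (n choose k) * ((real N - 2 * real k) - (real N - 2 * real (Suc k))))"
      unfolding c_def N_def by (rule stein_sum)
    also have "\<dots> = real N * (2 * (\<Sum>k\<le>n. real (n choose k)))"
      by (simp add: sum_distrib_left algebra_simps)
    also have "(\<Sum>k\<le>n. real (n choose k)) = 2 ^ n"
      using arg_cong[OF choose_row_sum[of n], of real] by simp
    finally show ?thesis by (simp add: N_def)
  qed
  have rs: "(\<Sum>k\<le>N. c k) = 2 ^ N"
    unfolding c_def using arg_cong[OF choose_row_sum[of N], of real] by simp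
  have "real N * \<bar>(\<Sum>k\<le>n. real (n choose k) * (g k - g (Suc k)))\<bar>
      = \<bar>(\<Sum>k\<le>N. c k * (real N - 2 * real k) * g k)\<bar>"
    unfolding c_def N_def using stein_sum[of n g] by (simp add: abs_mult)
  also have "\<dots> \<le> (\<Sum>k\<le>N. \<bar>c k * (real N - 2 * real k) * g k\<bar>)"
    by (rule sum_abs)
  also have "\<dots> \<le> (\<Sum>k\<le>N. sqrt (c k) * (sqrt (c k) * \<bar>real N - 2 * real k\<bar>))"
  proof (rule sum_mono)
    fix k
    have "\<bar>c k * (real N - 2 * real k) * g k\<bar> = c k * \<bar>real N - 2 * real k\<bar> * \<bar>g k\<bar>"
      using c0[of k] by (simp add: abs_mult)
    also have "\<dots> \<le> c k * \<bar>real N - 2 * real k\<bar> * 1"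
      using g[of k] c0[of k] by (intro mult_left_mono) auto
    also have "\<dots> = sqrt (c k) * (sqrt (c k) * \<bar>real N - 2 * real k\<bar>)"
      using c0[of k] by (simp add: mult.assoc[symmetric])
    finally show "\<bar>c k * (real N - 2 * real k) * g k\<bar> \<le> sqrt (c k) * (sqrt (c k) * \<bar>real N - 2 * real k\<bar>)" .
  qed
  also have "\<dots> \<le> sqrt ((\<Sum>k\<le>N. (sqrt (c k))^2) * (\<Sum>k\<le>N. (sqrt (c k) * \<bar>real N - 2 * real k\<bar>)^2))"
    by (rule real_le_rsqrt) (rule Cauchy_Schwarz_ineq_sum)
  also have "(\<Sum>k\<le>N. (sqrt (c k))^2) = 2 ^ N" using c0 rs by simp
  also have "(\<Sum>k\<le>N. (sqrt (c k) * \<bar>real N - 2 * real k\<bar>)^2) = real N * 2 ^ N"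
    using c0 sq by (simp add: power_mult_distrib)
  also have "sqrt (2 ^ N * (real N * 2 ^ N)) = 2 ^ N * sqrt (real N)"
  proof -
    have "(2::real) ^ N * (real N * 2 ^ N) = ((2::real) ^ N)\<^sup>2 * real N"
      by (simp add: power2_eq_square)
    hence "sqrt (2 ^ N * (real N * 2 ^ N)) = sqrt (((2::real) ^ N)\<^sup>2) * sqrt (real N)"
      by (simp only: real_sqrt_mult)
    thus ?thesis by simp
  qed
  finally have "real N * \<bar>(\<Sum>k\<le>n. real (n choose k) * (g k - g (Suc k)))\<bar> \<le> 2 ^ N * sqrt (real N)" .
  hence "\<bar>(\<Sum>k\<le>n. real (n choose k) * (g k - g (Suc k)))\<bar> \<le> 2 ^ N * sqrt (real N) / real N"
    using Npos by (simp add: pos_le_divide_eq mult.commute)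
  also have "2 ^ N * sqrt (real N) / real N = 2 ^ N / sqrt (real N)"
  proof -
    have "real N = sqrt (real N) * sqrt (real N)" by simp
    hence "2 ^ N * sqrt (real N) / real N = 2 ^ N * sqrt (real N) / (sqrt (real N) * sqrt (real N))"
      by metis
    also have "\<dots> = 2 ^ N / sqrt (real N)"
    proof -
      have sp: "sqrt (real N) > 0" using Npos by simp
      thus ?thesis by (simp add: divide_simps)
    qed
    finally show ?thesis .
  qed
  also have "(2::real) ^ N = 2 * 2 ^ n" by (simp add: N_def)
  finally show ?thesis by (simp add: N_def)
qed



lemma bounded_integrable_pmf:
  fixes f :: "'a \<Rightarrow> real"
  assumes "\<And>x. \<bar>f x\<bar> \<le> B"
  shows "integrable (measure_pmf M) f"
  using assms by (intro measure_pmf.integrable_const_bound[where B=B]) auto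

lemma integral_bind_pmf_bounded:
  fixes f :: "'b \<Rightarrow> real"
  assumes "\<And>x. \<bar>f x\<bar> \<le> B"
  shows "measure_pmf.expectation (bind_pmf M N) f = measure_pmf.expectation M (\<lambda>x. measure_pmf.expectation (N x) f)"
proof -
  have "measure_pmf (bind_pmf M N) = measure_pmf M \<bind> (\<lambda>x. measure_pmf (N x))"
    by (rule measure_pmf_bind)
  moreover have "integral\<^sup>L (measure_pmf M \<bind> (\<lambda>x. measure_pmf (N x))) f = \<integral> x. integral\<^sup>L (measure_pmf (N x)) f \<partial>measure_pmf M"
    apply (rule integral_bind[where K="count_space UNIV" and B=B and B'=1])
    using assms by (auto intro!: measurable_pmf_measure2 measure_pmf.finite_measure_axioms
       simp: measure_pmf_in_subprob_algebra)
  ultimately show ?thesis by simp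
qed

lemma prob_as_expectation:
  "measure_pmf.prob M A = measure_pmf.expectation M (indicator A)"
  by simp

lemma prob_bind_pmf:
  "measure_pmf.prob (bind_pmf M N) A = measure_pmf.expectation M (\<lambda>x. measure_pmf.prob (N x) A)"
proof -
  have "measure_pmf.prob (bind_pmf M N) A = measure_pmf.expectation (bind_pmf M N) (indicator A :: _ \<Rightarrow> real)"
    by simp
  also have "\<dots> = measure_pmf.expectation M (\<lambda>x. measure_pmf.expectation (N x) (indicator A :: _ \<Rightarrow> real))"
    by (rule integral_bind_pmf_bounded[where B=1]) (auto simp: indicator_def)
  finally show ?thesis by simp
qed

lemma abs_expectation_le:
  fixes f h :: "'a \<Rightarrow> real"
  assumes "\<And>x. \<bar>f x\<bar> \<le> B" "\<And>x. \<bar>h x\<bar> \<le> B'" "\<And>x. \<bar>f x\<bar> \<le> h x"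
  shows "\<bar>measure_pmf.expectation M f\<bar> \<le> measure_pmf.expectation M h"
proof -
  have i1: "integrable (measure_pmf M) f" by (rule bounded_integrable_pmf[OF assms(1)])
  have i2: "integrable (measure_pmf M) h" by (rule bounded_integrable_pmf[OF assms(2)])
  have "measure_pmf.expectation M f \<le> measure_pmf.expectation M h"
    using assms(3) by (intro integral_mono[OF i1 i2]) (auto simp: abs_le_iff)
  moreover have "measure_pmf.expectation M (\<lambda>x. - f x) \<le> measure_pmf.expectation M h"
    using assms(3) i1 by (intro integral_mono[OF _ i2]) (auto simp: abs_le_iff)
  ultimately show ?thesis by (simp add: abs_le_iff)
qed

lemma expectation_sq_le:
  fixes f :: "'a \<Rightarrow> real"
  assumes "\<And>x. \<bar>f x\<bar> \<le> B"
  shows "(measure_pmf.expectation M f)\<^sup>2 \<le> measure_pmf.expectation M (\<lambda>x. (f x)\<^sup>2)"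
proof -
  have i1: "integrable (measure_pmf M) f" by (rule bounded_integrable_pmf[OF assms(1)])
  have "\<bar>(f x)\<^sup>2\<bar> \<le> B\<^sup>2" for x
    using power_mono[OF assms[of x] abs_ge_zero, of 2] by simp
  hence i2: "integrable (measure_pmf M) (\<lambda>x. (f x)\<^sup>2)" by (rule bounded_integrable_pmf)
  have "0 \<le> measure_pmf.variance M f" by (rule measure_pmf.variance_positive)
  also have "measure_pmf.variance M f = measure_pmf.expectation M (\<lambda>x. (f x)\<^sup>2) - (measure_pmf.expectation M f)\<^sup>2"
    by (rule measure_pmf.variance_eq[OF i1 i2])
  finally show ?thesis by simp
qed

lemma bin_expect:
  fixes g :: "nat \<Rightarrow> real"
  shows "measure_pmf.expectation (binomial_pmf n (1/2)) g = (\<Sum>k\<le>n. real (n choose k) * g k) / 2^n"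
proof -
  have "measure_pmf.expectation (binomial_pmf n (1/2)) g = (\<Sum>k\<le>n. g k * pmf (binomial_pmf n (1/2)) k)"
    by (rule integral_measure_pmf_real) auto
  also have "\<dots> = (\<Sum>k\<le>n. real (n choose k) * g k / 2^n)"
  proof (rule sum.cong[OF refl])
    fix k assume "k \<in> {..n}"
    hence "(1/2::real) ^ k * (1 - 1/2) ^ (n - k) = (1/2) ^ (k + (n - k))"
      by (simp only: power_add) simp
    also have "\<dots> = 1 / 2 ^ n" using \<open>k \<in> {..n}\<close> by (simp add: power_one_over)
    finally have "(1/2::real) ^ k * (1 - 1/2) ^ (n - k) = 1 / 2 ^ n" .
    thus "g k * pmf (binomial_pmf n (1/2)) k = real (n choose k) * g k / 2^n"
      by (simp add: mult.assoc)
  qed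
  also have "\<dots> = (\<Sum>k\<le>n. real (n choose k) * g k) / 2^n"
    by (simp add: sum_divide_distrib)
  finally show ?thesis .
qed

lemma kernel_expect_bound:
  fixes g :: "nat \<Rightarrow> real"
  assumes g: "\<And>k. \<bar>g k\<bar> \<le> 1"
  shows "\<bar>measure_pmf.expectation (binomial_pmf n (1/2)) g
          - measure_pmf.expectation (binomial_pmf n (1/2)) (\<lambda>k. g (Suc k))\<bar> \<le> 2 / sqrt (real (Suc n))"
proof -
  have "measure_pmf.expectation (binomial_pmf n (1/2)) g
          - measure_pmf.expectation (binomial_pmf n (1/2)) (\<lambda>k. g (Suc k))
       = (\<Sum>k\<le>n. real (n choose k) * (g k - g (Suc k))) / 2^n"
    by (simp add: bin_expect diff_divide_distrib[symmetric] sum_subtractf[symmetric] algebra_simps)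
  also have "\<bar>\<dots>\<bar> = \<bar>(\<Sum>k\<le>n. real (n choose k) * (g k - g (Suc k)))\<bar> / 2^n"
    by (simp add: abs_divide)
  also have "\<dots> \<le> (2 * 2 ^ n / sqrt (real (Suc n))) / 2^n"
    by (rule divide_right_mono[OF kernel_sum_bound[OF g]]) simp
  also have "\<dots> = 2 / sqrt (real (Suc n))" by simp
  finally show ?thesis .
qed

definition smul :: "nat \<Rightarrow> (nat \<Rightarrow> int) \<Rightarrow> nat \<Rightarrow> int" where
  "smul k e = (\<lambda>i. int k * e i)"

definition Kb :: "(nat \<Rightarrow> int) \<Rightarrow> nat \<Rightarrow> (nat \<Rightarrow> int) \<Rightarrow> (nat \<Rightarrow> int) pmf" where
  "Kb e n z = map_pmf (\<lambda>k. vadd z (smul k e)) (binomial_pmf n (1/2))"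

definition Fk :: "(nat \<Rightarrow> int) \<Rightarrow> ((nat \<Rightarrow> int) \<times> nat) pmf \<Rightarrow> (nat \<Rightarrow> int) pmf" where
  "Fk e Q = bind_pmf Q (\<lambda>(z,n). Kb e n z)"

lemma Kb_prob_diff:
  "\<bar>measure_pmf.prob (Kb e n z) A - measure_pmf.prob (map_pmf (\<lambda>x. vadd x e) (Kb e n z)) A\<bar>
     \<le> 2 / sqrt (real (Suc n))"
proof -
  define g :: "nat \<Rightarrow> real" where "g = (\<lambda>k. indicator A (vadd z (smul k e)))"
  have g1: "\<bar>g k\<bar> \<le> 1" for k by (simp add: g_def indicator_def)
  have sh: "vadd (vadd z (smul k e)) e = vadd z (smul (Suc k) e)" for k
    by (simp add: vadd_def smul_def fun_eq_iff algebra_simps)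
  have ind1: "indicator ((\<lambda>k. vadd z (smul k e)) -` A) = g"
    by (auto simp: indicator_def fun_eq_iff g_def)
  have ind2: "indicator ((\<lambda>k. vadd z (smul (Suc k) e)) -` A) = (\<lambda>k. g (Suc k))"
    by (auto simp: indicator_def fun_eq_iff g_def)
  have "measure_pmf.prob (Kb e n z) A = measure_pmf.prob (binomial_pmf n (1/2)) ((\<lambda>k. vadd z (smul k e)) -` A)"
    by (simp add: Kb_def)
  also have "\<dots> = measure_pmf.expectation (binomial_pmf n (1/2)) (indicator ((\<lambda>k. vadd z (smul k e)) -` A))"
    by simp
  finally have 1: "measure_pmf.prob (Kb e n z) A = measure_pmf.expectation (binomial_pmf n (1/2)) g"
    by (simp only: ind1)
  have "measure_pmf.prob (map_pmf (\<lambda>x. vadd x e) (Kb e n z)) A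
     = measure_pmf.prob (binomial_pmf n (1/2)) ((\<lambda>k. vadd z (smul (Suc k) e)) -` A)"
    by (simp add: Kb_def map_pmf_comp sh)
  also have "\<dots> = measure_pmf.expectation (binomial_pmf n (1/2)) (indicator ((\<lambda>k. vadd z (smul (Suc k) e)) -` A))"
    by simp
  finally have 2: "measure_pmf.prob (map_pmf (\<lambda>x. vadd x e) (Kb e n z)) A
      = measure_pmf.expectation (binomial_pmf n (1/2)) (\<lambda>k. g (Suc k))"
    by (simp only: ind2)
  show ?thesis using 1 2 kernel_expect_bound[OF g1] by simp
qed

lemma prob_diff_le1:
  "\<bar>measure_pmf.prob p A - measure_pmf.prob q B\<bar> \<le> 1"
proof -
  have "measure_pmf.prob p A \<le> 1" "measure_pmf.prob q B \<le> 1"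
    "0 \<le> measure_pmf.prob p A" "0 \<le> measure_pmf.prob q B"
    by (auto simp: measure_pmf.prob_le_1)
  thus ?thesis unfolding abs_le_iff by linarith
qed

lemma Fk_prob_diff:
  "\<bar>measure_pmf.prob (Fk e Q) A - measure_pmf.prob (map_pmf (\<lambda>x. vadd x e) (Fk e Q)) A\<bar>
     \<le> measure_pmf.expectation Q (\<lambda>(z,n). 2 / sqrt (real (Suc n)))"
proof -
  have "measure_pmf.prob (Fk e Q) A - measure_pmf.prob (map_pmf (\<lambda>x. vadd x e) (Fk e Q)) A
      = measure_pmf.expectation Q (\<lambda>x. measure_pmf.prob (Kb e (snd x) (fst x)) A)
        - measure_pmf.expectation Q (\<lambda>x. measure_pmf.prob (map_pmf (\<lambda>x. vadd x e) (Kb e (snd x) (fst x))) A)"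
    by (simp add: Fk_def prob_bind_pmf map_bind_pmf case_prod_beta)
  also have "\<dots> = measure_pmf.expectation Q (\<lambda>x. measure_pmf.prob (Kb e (snd x) (fst x)) A
        - measure_pmf.prob (map_pmf (\<lambda>x. vadd x e) (Kb e (snd x) (fst x))) A)"
    by (rule Bochner_Integration.integral_diff[symmetric];
        rule bounded_integrable_pmf[where B=1]; simp)
  also have "\<bar>\<dots>\<bar> \<le> measure_pmf.expectation Q (\<lambda>(z,n). 2 / sqrt (real (Suc n)))"
  proof (rule abs_expectation_le[where B=1 and B'=2])
    fix x :: "(nat \<Rightarrow> int) \<times> nat"
    show "\<bar>measure_pmf.prob (Kb e (snd x) (fst x)) A
        - measure_pmf.prob (map_pmf (\<lambda>x. vadd x e) (Kb e (snd x) (fst x))) A\<bar> \<le> 1"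
      by (rule prob_diff_le1)
    have "1 \<le> sqrt (real (Suc (snd x)))" by simp
    hence "2 / sqrt (real (Suc (snd x))) \<le> 2"
      by (simp add: divide_le_eq)
    thus "\<bar>(case x of (z, n) \<Rightarrow> 2 / sqrt (real (Suc n)))\<bar> \<le> 2"
      by (simp add: case_prod_beta)
    show "\<bar>measure_pmf.prob (Kb e (snd x) (fst x)) A
        - measure_pmf.prob (map_pmf (\<lambda>x. vadd x e) (Kb e (snd x) (fst x))) A\<bar>
        \<le> (case x of (z, n) \<Rightarrow> 2 / sqrt (real (Suc n)))"
      using Kb_prob_diff[of e "snd x" "fst x" A] by (simp add: case_prod_beta)
  qed
  finally show ?thesis .
qed

lemma dTV_le:
  assumes "\<And>A. \<bar>measure_pmf.prob p A - measure_pmf.prob q A\<bar> \<le> c"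
  shows "dTV p q \<le> c"
  unfolding dTV_def by (rule cSUP_least) (auto intro: assms)

lemma dTV_ge:
  "\<bar>measure_pmf.prob p A - measure_pmf.prob q A\<bar> \<le> dTV p q"
  unfolding dTV_def
proof (rule cSUP_upper)
  show "bdd_above (range (\<lambda>A. \<bar>measure_pmf.prob p A - measure_pmf.prob q A\<bar>))"
    by (rule bdd_aboveI[where M=1]) (auto intro: prob_diff_le1)
qed simp

lemma sum_law_0: "sum_law 0 p = return_pmf (\<lambda>_. 0)"
  by (simp add: sum_law_def)

lemma sum_law_Suc:
  "sum_law (Suc m) p = bind_pmf (sum_law m p) (\<lambda>w. map_pmf (\<lambda>y. vadd w y) (p m))"
proof -
  define sf where "sf = (\<lambda>(y::nat \<Rightarrow> nat \<Rightarrow> int) k. \<Sum>i<m. y i k)"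
  have key: "(\<lambda>k. \<Sum>i<Suc m. (f(m := y)) i k) = vadd (sf f) y" for f y
    by (simp add: sf_def vadd_def fun_eq_iff)
  have "sum_law (Suc m) p = map_pmf (\<lambda>y k. \<Sum>i<Suc m. y i k)
          (bind_pmf (p m) (\<lambda>y. bind_pmf (Pi_pmf {..<m} (\<lambda>_. 0) p) (\<lambda>f. return_pmf (f(m := y)))))"
    unfolding sum_law_def lessThan_Suc by (subst Pi_pmf_insert') auto
  also have "\<dots> = bind_pmf (p m) (\<lambda>y. bind_pmf (Pi_pmf {..<m} (\<lambda>_. 0) p) (\<lambda>f. return_pmf (vadd (sf f) y)))"
    by (simp add: map_bind_pmf vadd_def sf_def)
  also have "\<dots> = bind_pmf (Pi_pmf {..<m} (\<lambda>_. 0) p) (\<lambda>f. bind_pmf (p m) (\<lambda>y. return_pmf (vadd (sf f) y)))"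
    by (rule bind_commute_pmf)
  also have "\<dots> = bind_pmf (sum_law m p) (\<lambda>w. map_pmf (\<lambda>y. vadd w y) (p m))"
    by (simp add: sum_law_def bind_map_pmf map_pmf_def sf_def bind_assoc_pmf bind_return_pmf)
  finally show ?thesis .
qed

lemma binomial_add:
  "bind_pmf (binomial_pmf n q) (\<lambda>k. map_pmf (\<lambda>k'. k + k') (binomial_pmf n' q)) = binomial_pmf (n + n') q"
  if "q \<in> {0..1}"
proof (induction n')
  case 0
  then show ?case using that by (simp add: binomial_pmf_0 bind_return_pmf')
next
  case (Suc n')
  have "binomial_pmf (n + Suc n') q = bind_pmf (bernoulli_pmf q) (\<lambda>b. bind_pmf (binomial_pmf (n + n') q) (\<lambda>k. return_pmf ((if b then 1 else 0) + k)))"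
    using that by (simp add: binomial_pmf_Suc)
  also have "\<dots> = bind_pmf (bernoulli_pmf q) (\<lambda>b. bind_pmf (binomial_pmf n q) (\<lambda>k. bind_pmf (binomial_pmf n' q) (\<lambda>k'. return_pmf ((if b then 1 else 0) + (k + k')))))"
    by (simp add: Suc.IH[symmetric] bind_assoc_pmf map_pmf_def bind_return_pmf)
  also have "\<dots> = bind_pmf (binomial_pmf n q) (\<lambda>k. bind_pmf (bernoulli_pmf q) (\<lambda>b. bind_pmf (binomial_pmf n' q) (\<lambda>k'. return_pmf ((if b then 1 else 0) + (k + k')))))"
    by (rule bind_commute_pmf)
  also have "\<dots> = bind_pmf (binomial_pmf n q) (\<lambda>k. map_pmf (\<lambda>k'. k + k') (binomial_pmf (Suc n') q))"
    using that by (simp add: binomial_pmf_Suc map_pmf_def bind_assoc_pmf bind_return_pmf algebra_simps)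
  finally show ?case by simp
qed

lemma Kb_conv:
  "bind_pmf (Kb e n z) (\<lambda>w. map_pmf (vadd w) (Kb e n' z')) = Kb e (n + n') (vadd z z')"
proof -
  have eq: "vadd (vadd z (smul k e)) (vadd z' (smul k' e)) = vadd (vadd z z') (smul (k + k') e)" for k k'
    by (simp add: vadd_def smul_def fun_eq_iff algebra_simps)
  have "bind_pmf (Kb e n z) (\<lambda>w. map_pmf (vadd w) (Kb e n' z'))
     = map_pmf (\<lambda>K. vadd (vadd z z') (smul K e))
         (bind_pmf (binomial_pmf n (1/2)) (\<lambda>k. map_pmf (\<lambda>k'. k + k') (binomial_pmf n' (1/2))))"
    by (simp add: Kb_def bind_map_pmf map_bind_pmf map_pmf_comp eq)
  also have "\<dots> = Kb e (n + n') (vadd z z')"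
    by (simp add: binomial_add Kb_def)
  finally show ?thesis .
qed

lemma Fk_conv:
  "bind_pmf (Fk e Q) (\<lambda>w. map_pmf (vadd w) (Fk e R))
     = Fk e (bind_pmf Q (\<lambda>x. map_pmf (\<lambda>y. (vadd (fst x) (fst y), snd x + snd y)) R))"
proof -
  have "bind_pmf (Fk e Q) (\<lambda>w. map_pmf (vadd w) (Fk e R))
     = bind_pmf Q (\<lambda>x. bind_pmf (Kb e (snd x) (fst x)) (\<lambda>w. bind_pmf R (\<lambda>y. map_pmf (vadd w) (Kb e (snd y) (fst y)))))"
    by (simp add: Fk_def bind_assoc_pmf map_bind_pmf case_prod_beta)
  also have "\<dots> = bind_pmf Q (\<lambda>x. bind_pmf R (\<lambda>y. bind_pmf (Kb e (snd x) (fst x)) (\<lambda>w. map_pmf (vadd w) (Kb e (snd y) (fst y)))))"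
    by (subst bind_commute_pmf) (rule refl)
  also have "\<dots> = bind_pmf Q (\<lambda>x. bind_pmf R (\<lambda>y. Kb e (snd x + snd y) (vadd (fst x) (fst y))))"
    by (simp add: Kb_conv)
  also have "\<dots> = Fk e (bind_pmf Q (\<lambda>x. map_pmf (\<lambda>y. (vadd (fst x) (fst y), snd x + snd y)) R))"
    by (simp add: Fk_def bind_assoc_pmf bind_map_pmf case_prod_beta)
  finally show ?thesis .
qed


primrec Qm :: "(nat \<Rightarrow> ((nat \<Rightarrow> int) \<times> nat) pmf) \<Rightarrow> nat \<Rightarrow> ((nat \<Rightarrow> int) \<times> nat) pmf" where
  "Qm R 0 = return_pmf (\<lambda>_. 0, 0)"
| "Qm R (Suc m) = bind_pmf (Qm R m) (\<lambda>x. map_pmf (\<lambda>y. (vadd (fst x) (fst y), snd x + snd y)) (R m))"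

lemma sum_law_Fk:
  assumes "\<And>i. i < m \<Longrightarrow> p i = Fk e (R i)"
  shows "sum_law m p = Fk e (Qm R m)"
  using assms
proof (induction m)
  case 0
  have "vadd (\<lambda>_. 0) (smul 0 e) = (\<lambda>_. 0)" by (simp add: vadd_def smul_def)
  then show ?case
    by (simp add: sum_law_0 Fk_def Kb_def binomial_pmf_0 bind_return_pmf)
next
  case (Suc m)
  have "sum_law (Suc m) p = bind_pmf (Fk e (Qm R m)) (\<lambda>w. map_pmf (vadd w) (Fk e (R m)))"
    using Suc by (simp add: sum_law_Suc)
  also have "\<dots> = Fk e (Qm R (Suc m))" by (simp add: Fk_conv)
  finally show ?case .
qed

lemma expect_R:
  fixes \<phi> :: "nat \<Rightarrow> real"
  assumes "\<And>x. x \<in> set_pmf R \<Longrightarrow> snd x \<le> 1"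
  shows "measure_pmf.expectation R (\<lambda>y. \<phi> (snd y))
       = (1 - measure_pmf.prob R {y. snd y = 1}) * \<phi> 0 + measure_pmf.prob R {y. snd y = 1} * \<phi> 1"
proof -
  have "measure_pmf.expectation R (\<lambda>y. \<phi> (snd y))
      = measure_pmf.expectation R (\<lambda>y. \<phi> 0 + (\<phi> 1 - \<phi> 0) * indicator {y. snd y = 1} y)"
  proof (rule integral_cong_AE)
    show "AE y in measure_pmf R. \<phi> (snd y) = \<phi> 0 + (\<phi> 1 - \<phi> 0) * indicator {y. snd y = 1} y"
    proof (rule AE_pmfI)
      fix y assume "y \<in> set_pmf R"
      hence "snd y = 0 \<or> snd y = 1" using assms by fastforce
      thus "\<phi> (snd y) = \<phi> 0 + (\<phi> 1 - \<phi> 0) * indicator {y. snd y = 1} y"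
        by (auto simp: indicator_def)
    qed
  qed auto
  also have "\<dots> = \<phi> 0 + (\<phi> 1 - \<phi> 0) * measure_pmf.prob R {y. snd y = 1}"
    by (subst Bochner_Integration.integral_add) (auto simp: measure_pmf.emeasure_eq_measure)
  finally show ?thesis by (simp add: algebra_simps)
qed

lemma step_ineq:
  fixes b v :: real
  assumes "b \<ge> 1" "0 \<le> v" "v \<le> 1"
  shows "(1 - v) / b + v / (b + 1) \<le> 1 / (b + v / 2)"
proof -
  have b0: "b > 0" "b + 1 > 0" "b + v/2 > 0" using assms by auto
  have "(1 - v) / b + v / (b + 1) = (b + 1 - v) / (b * (b + 1))"
    using b0 by (simp add: field_simps)
  also have "\<dots> \<le> 1 / (b + v / 2)"
  proof -
    have "0 \<le> v * (b + v - 1)" using assms by (intro mult_nonneg_nonneg) auto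
    hence "(b + 1 - v) * (b + v / 2) \<le> b * (b + 1)"
      by (simp add: algebra_simps)
    thus ?thesis using b0 by (simp add: divide_simps)
  qed
  finally show ?thesis .
qed

definition vR :: "(nat \<Rightarrow> ((nat \<Rightarrow> int) \<times> nat) pmf) \<Rightarrow> nat \<Rightarrow> real" where
  "vR R i = measure_pmf.prob (R i) {y. snd y = 1}"

lemma Qm_expect:
  assumes R: "\<And>i x. x \<in> set_pmf (R i) \<Longrightarrow> snd x \<le> 1"
  assumes k: "k \<ge> 1"
  shows "measure_pmf.expectation (Qm R m) (\<lambda>x. 1 / (real (snd x) + k)) \<le> 1 / ((\<Sum>i<m. vR R i) / 2 + k)"
  using k
proof (induction m arbitrary: k)
  case 0
  then show ?case by simp
next
  case (Suc m)
  define v where "v = vR R m"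
  define S where "S = (\<Sum>i<m. vR R i)"
  have v01: "0 \<le> v" "v \<le> 1" by (auto simp: v_def vR_def measure_pmf.prob_le_1)
  have S0: "0 \<le> S" by (auto simp: S_def vR_def intro!: sum_nonneg)
  have bnd: "\<bar>1 / (real n + k')\<bar> \<le> 1" if "k' \<ge> 1" for n :: nat and k' :: real
    using that by simp
  have "measure_pmf.expectation (Qm R (Suc m)) (\<lambda>x. 1 / (real (snd x) + k))
      = measure_pmf.expectation (Qm R m) (\<lambda>x. measure_pmf.expectation (R m)
          (\<lambda>y. 1 / (real (snd x + snd y) + k)))"
    unfolding Qm.simps by (subst integral_bind_pmf_bounded[where B=1]) (use bnd Suc.prems in blast, simp add: add.assoc)
  also have "\<dots> = measure_pmf.expectation (Qm R m) (\<lambda>x. (1 - v) * (1 / (real (snd x) + k))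
          + v * (1 / (real (snd x) + (k + 1))))"
  proof (rule Bochner_Integration.integral_cong[OF refl])
    fix x
    show "measure_pmf.expectation (R m) (\<lambda>y. 1 / (real (snd x + snd y) + k))
        = (1 - v) * (1 / (real (snd x) + k)) + v * (1 / (real (snd x) + (k + 1)))"
      using expect_R[where R="R m" and \<phi>="\<lambda>t. 1 / (real (snd x + t) + k)", OF R]
      by (simp add: v_def vR_def algebra_simps)
  qed
  also have "\<dots> = (1 - v) * measure_pmf.expectation (Qm R m) (\<lambda>x. 1 / (real (snd x) + k))
          + v * measure_pmf.expectation (Qm R m) (\<lambda>x. 1 / (real (snd x) + (k + 1)))"
  proof -
    have i1: "integrable (measure_pmf (Qm R m)) (\<lambda>x. 1 / (real (snd x) + k))"
      by (rule bounded_integrable_pmf[where B=1]) (use bnd Suc.prems in blast)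
    have i2: "integrable (measure_pmf (Qm R m)) (\<lambda>x. 1 / (real (snd x) + (k + 1)))"
      by (rule bounded_integrable_pmf[where B=1]) (use bnd Suc.prems in auto)
    show ?thesis
      apply (subst Bochner_Integration.integral_add)
        apply (rule integrable_mult_right[OF i1])
       apply (rule integrable_mult_right[OF i2])
      apply (simp only: integral_mult_right_zero)
      done
  qed
  also have "\<dots> \<le> (1 - v) * (1 / (S / 2 + k)) + v * (1 / (S / 2 + (k + 1)))"
    using Suc.IH[of k] Suc.IH[of "k + 1"] Suc.prems v01
    by (intro add_mono mult_left_mono) (auto simp: S_def)
  also have "\<dots> \<le> 1 / ((S / 2 + k) + v / 2)"
    using step_ineq[of "S/2 + k" v] Suc.prems v01 S0 by (simp add: add.assoc)
  also have "(S / 2 + k) + v / 2 = (\<Sum>i<Suc m. vR R i) / 2 + k"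
    by (simp add: S_def v_def field_simps)
  finally show ?case .
qed

lemma main_j:
  assumes p: "\<And>i. i < m \<Longrightarrow> p i = Fk e (R i)"
  assumes R: "\<And>i x. x \<in> set_pmf (R i) \<Longrightarrow> snd x \<le> 1"
  assumes S: "(\<Sum>i<m. vR R i) > 0"
  shows "dTV (sum_law m p) (map_pmf (\<lambda>x. vadd x e) (sum_law m p)) \<le> 4 / sqrt (\<Sum>i<m. vR R i)"
proof -
  define S where "S = (\<Sum>i<m. vR R i)"
  define Q where "Q = Qm R m"
  define f where "f = (\<lambda>x::(nat \<Rightarrow> int) \<times> nat. 1 / sqrt (real (snd x) + 1))"
  have f1: "\<bar>f x\<bar> \<le> 1" for x
    by (simp add: f_def)
  have fsq: "(f x)\<^sup>2 = 1 / (real (snd x) + 1)" for x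
    by (simp add: f_def power_divide)
  have "(measure_pmf.expectation Q f)\<^sup>2 \<le> measure_pmf.expectation Q (\<lambda>x. (f x)\<^sup>2)"
    by (rule expectation_sq_le[OF f1])
  also have "\<dots> \<le> 1 / (S / 2 + 1)"
    using Qm_expect[OF R, where k=1 and m=m] by (simp add: Q_def S_def fsq)
  finally have "measure_pmf.expectation Q f \<le> sqrt (1 / (S / 2 + 1))"
    by (rule real_le_rsqrt)
  also have "\<dots> \<le> sqrt (2 / S)"
    using S by (intro real_sqrt_le_mono) (simp add: S_def field_simps)
  also have "\<dots> = sqrt 2 / sqrt S" by (simp add: real_sqrt_divide)
  finally have Ef: "measure_pmf.expectation Q f \<le> sqrt 2 / sqrt S" .
  have "dTV (sum_law m p) (map_pmf (\<lambda>x. vadd x e) (sum_law m p))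
      \<le> measure_pmf.expectation Q (\<lambda>(z,n). 2 / sqrt (real (Suc n)))"
  proof -
    have W: "sum_law m p = Fk e Q" using sum_law_Fk[of m p e R] p by (simp add: Q_def)
    show ?thesis unfolding W by (rule dTV_le) (rule Fk_prob_diff)
  qed
  also have "(\<lambda>(z,n). 2 / sqrt (real (Suc n))) = (\<lambda>x. 2 * f x)"
    by (auto simp: f_def fun_eq_iff add.commute)
  also have "measure_pmf.expectation Q (\<lambda>x. 2 * f x) = 2 * measure_pmf.expectation Q f"
    by simp
  also have "\<dots> \<le> 2 * (sqrt 2 / sqrt S)" using Ef by simp
  also have "\<dots> \<le> 4 / sqrt S"
  proof -
    have "sqrt 2 \<le> 2" using real_sqrt_le_mono[of 2 4] by simp
    thus ?thesis using S by (simp add: S_def divide_right_mono)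
  qed
  finally show ?thesis by (simp add: S_def)
qed



definition vsub :: "(nat \<Rightarrow> int) \<Rightarrow> (nat \<Rightarrow> int) \<Rightarrow> nat \<Rightarrow> int" where
  "vsub x y = (\<lambda>k. x k - y k)"

lemma vsub_vadd[simp]: "vsub (vadd x e) e = x" and vadd_vsub[simp]: "vadd (vsub x e) e = x"
  by (auto simp: vsub_def vadd_def)

lemma eq_vsub_iff: "y = vsub x e \<longleftrightarrow> x = vadd y e"
  by (auto simp: vsub_def vadd_def fun_eq_iff eq_diff_eq)

lemma eq_vadd_iff: "y = vadd x e \<longleftrightarrow> x = vsub y e"
  by (auto simp: vsub_def vadd_def fun_eq_iff eq_diff_eq)

lemma vadd_neq: "e \<noteq> (\<lambda>_. 0) \<Longrightarrow> vadd x e \<noteq> x"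
  by (auto simp: vadd_def fun_eq_iff)

lemma vsub_neq: "e \<noteq> (\<lambda>_. 0) \<Longrightarrow> vsub x e \<noteq> x"
  by (auto simp: vsub_def fun_eq_iff)

lemma vadd_vsub_neq: "e \<noteq> (\<lambda>_. 0) \<Longrightarrow> vadd x e \<noteq> vsub x e"
  by (auto simp: vsub_def vadd_def fun_eq_iff)

lemma Kb_0: "Kb e 0 z = return_pmf z"
proof -
  have "vadd z (smul 0 e) = z" by (simp add: vadd_def smul_def)
  thus ?thesis by (simp add: Kb_def binomial_pmf_0)
qed

lemma Kb_1: "Kb e (Suc 0) z = map_pmf (\<lambda>c. if c then vadd z e else z) (bernoulli_pmf (1/2))"
proof -
  have a: "vadd z (smul 0 e) = z" "vadd z (smul 1 e) = vadd z e" by (auto simp: vadd_def smul_def)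
  have bin1: "binomial_pmf (Suc 0) (1/2) = map_pmf (\<lambda>b. if b then 1 else 0) (bernoulli_pmf (1/2))"
    using binomial_pmf_Suc[of "1/2" 0]
    by (simp add: binomial_pmf_0 bind_return_pmf map_pmf_def)
  have fe: "(\<lambda>b. vadd z (smul (if b then 1 else 0) e)) = (\<lambda>c. if c then vadd z e else z)"
    by (auto simp: fun_eq_iff vadd_def smul_def)
  show ?thesis
    unfolding Kb_def bin1 map_pmf_comp fe by (rule refl)
qed

lemma pmf_H:
  "pmf (map_pmf (\<lambda>c. if c then vadd z e else z) (bernoulli_pmf (1/2))) y
     = (indicator {vadd z e} y + indicator {z} y) / 2"
proof -
  have "map_pmf (\<lambda>c. if c then vadd z e else z) (bernoulli_pmf (1/2))
      = bind_pmf (bernoulli_pmf (1/2)) (\<lambda>c. return_pmf (if c then vadd z e else z))"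
    by (simp add: map_pmf_def)
  thus ?thesis by (simp add: pmf_bind) (auto simp: indicator_def)
qed

locale decomp =
  fixes p :: "(nat \<Rightarrow> int) pmf" and e :: "nat \<Rightarrow> int"
  assumes e0: "e \<noteq> (\<lambda>_. 0)"
begin

definition f where "f = pmf p"
definition nu where "nu x = min (f x) (f (vsub x e))"
definition a1 where "a1 x = nu x / (2 * f x)"
definition a2 where "a2 x = nu (vadd x e) / (2 * f x)"
definition q where "q x = a1 x + a2 x"
definition r where "r x = a1 x / q x"

definition cat where
  "cat x = bind_pmf (bernoulli_pmf (q x)) (\<lambda>I. if I then
      map_pmf (\<lambda>b. if b then (vsub x e, 1::nat) else (x, 1)) (bernoulli_pmf (r x))
    else return_pmf (x, 0))"

definition Rd where "Rd = bind_pmf p cat"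

definition H where "H z = map_pmf (\<lambda>c. if c then vadd z e else z) (bernoulli_pmf (1/2))"

definition T where
  "T x = bind_pmf (bernoulli_pmf (q x)) (\<lambda>I. if I then
      bind_pmf (bernoulli_pmf (r x)) (\<lambda>b. if b then H (vsub x e) else H x)
    else return_pmf x)"

lemma f0: "f x \<ge> 0" by (simp add: f_def)
lemma nu_le: "nu x \<le> f x" "nu (vadd x e) \<le> f x" "nu x \<ge> 0"
  by (auto simp: nu_def f0)

lemma fa1: "f x * a1 x = nu x / 2"
  using nu_le[of x] f0[of x] by (cases "f x = 0") (auto simp: a1_def field_simps)

lemma fa2: "f x * a2 x = nu (vadd x e) / 2"
  using nu_le[of x] nu_le(3)[of "vadd x e"] f0[of x] by (cases "f x = 0") (auto simp: a2_def field_simps)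

lemma a_bounds: "0 \<le> a1 x" "a1 x \<le> 1/2" "0 \<le> a2 x" "a2 x \<le> 1/2"
proof -
  show "0 \<le> a1 x" "0 \<le> a2 x" using nu_le f0 by (auto simp: a1_def a2_def)
  show "a1 x \<le> 1/2"
    using nu_le[of x] f0[of x] by (cases "f x = 0") (auto simp: a1_def field_simps)
  show "a2 x \<le> 1/2"
    using nu_le[of x] f0[of x] by (cases "f x = 0") (auto simp: a2_def field_simps)
qed

lemma q_bounds: "0 \<le> q x" "q x \<le> 1"
  using a_bounds[of x] by (auto simp: q_def)

lemma r_bounds: "0 \<le> r x" "r x \<le> 1"
  using a_bounds[of x] by (auto simp: r_def q_def divide_le_eq)

lemma qr: "q x * r x = a1 x" "q x * (1 - r x) = a2 x"
proof -
  have "q x * r x = a1 x"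
  proof (cases "q x = 0")
    case True
    hence "a1 x = 0" using a_bounds[of x] by (auto simp: q_def)
    thus ?thesis by (simp add: r_def)
  next
    case False
    thus ?thesis by (simp add: r_def)
  qed
  thus "q x * r x = a1 x" "q x * (1 - r x) = a2 x"
    by (auto simp: algebra_simps q_def)
qed

lemma Fk_Rd: "Fk e Rd = bind_pmf p T"
proof -
  have "Fk e Rd = bind_pmf p (\<lambda>x. bind_pmf (cat x) (\<lambda>(z,n). Kb e n z))"
    by (simp add: Fk_def Rd_def bind_assoc_pmf)
  also have "\<dots> = bind_pmf p T"
  proof (rule bind_pmf_cong[OF refl])
    fix x
    show "bind_pmf (cat x) (\<lambda>(z,n). Kb e n z) = T x"
      unfolding cat_def T_def bind_assoc_pmf
    proof (rule bind_pmf_cong[OF refl])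
      fix I
      show "bind_pmf (if I then map_pmf (\<lambda>b. if b then (vsub x e, 1::nat) else (x, 1)) (bernoulli_pmf (r x))
                else return_pmf (x, 0)) (\<lambda>(z,n). Kb e n z)
          = (if I then bind_pmf (bernoulli_pmf (r x)) (\<lambda>b. if b then H (vsub x e) else H x) else return_pmf x)"
        by (cases I) (auto simp: bind_return_pmf bind_map_pmf Kb_0 Kb_1 H_def if_distrib cong: if_cong)
    qed
  qed
  finally show ?thesis .
qed

lemma pmf_T:
  "pmf (T x) y = a1 x * (indicator {x} y + indicator {vsub x e} y) / 2
     + a2 x * (indicator {vadd x e} y + indicator {x} y) / 2 + (1 - q x) * indicator {x} y"
proof -
  have "pmf (T x) y = q x * (r x * pmf (H (vsub x e)) y + (1 - r x) * pmf (H x) y) + (1 - q x) * indicator {x} y"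
    using q_bounds[of x] r_bounds[of x] by (simp add: T_def pmf_bind) (auto simp: indicator_def algebra_simps)
  also have "\<dots> = (q x * r x) * pmf (H (vsub x e)) y + (q x * (1 - r x)) * pmf (H x) y + (1 - q x) * indicator {x} y"
    by (simp add: algebra_simps)
  also have "\<dots> = a1 x * (indicator {x} y + indicator {vsub x e} y) / 2
     + a2 x * (indicator {vadd x e} y + indicator {x} y) / 2 + (1 - q x) * indicator {x} y"
    by (simp add: qr H_def pmf_H)
  finally show ?thesis .
qed

lemma bind_T: "bind_pmf p T = p"
proof (rule pmf_eqI)
  fix y
  have d: "vadd y e \<noteq> y" "vsub y e \<noteq> y" "vadd y e \<noteq> vsub y e"
    using vadd_neq[OF e0] vsub_neq[OF e0] vadd_vsub_neq[OF e0] by auto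
  have d2: "vadd (vadd y e) e \<noteq> y" "vsub (vsub y e) e \<noteq> y"
    using d by (metis vsub_vadd vadd_vsub)+
  have "pmf (bind_pmf p T) y = measure_pmf.expectation p (\<lambda>x. pmf (T x) y)"
    by (simp add: pmf_bind)
  also have "\<dots> = (\<Sum>x\<in>{y, vadd y e, vsub y e}. pmf (T x) y * pmf p x)"
  proof (rule integral_measure_pmf_real)
    fix x assume nz: "pmf (T x) y \<noteq> 0"
    show "x \<in> {y, vadd y e, vsub y e}"
    proof (rule ccontr)
      assume "x \<notin> {y, vadd y e, vsub y e}"
      hence "x \<noteq> y" "y \<noteq> vsub x e" "y \<noteq> vadd x e"
        using eq_vsub_iff[of y x e] eq_vadd_iff[of y x e] by auto
      hence "pmf (T x) y = 0" unfolding pmf_T by (simp add: indicator_def)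
      with nz show False by simp
    qed
  qed simp
  also have "\<dots> = pmf (T y) y * f y + pmf (T (vadd y e)) y * f (vadd y e) + pmf (T (vsub y e)) y * f (vsub y e)"
    using d by (simp add: f_def)
  also have "pmf (T y) y = a1 y / 2 + a2 y / 2 + (1 - q y)"
    unfolding pmf_T using d by (simp add: indicator_def)
  also have "pmf (T (vadd y e)) y = a1 (vadd y e) / 2"
    unfolding pmf_T using d d2 by (simp add: indicator_def)
  also have "pmf (T (vsub y e)) y = a2 (vsub y e) / 2"
    unfolding pmf_T using d d2 by (simp add: indicator_def)
  also have "(a1 y / 2 + a2 y / 2 + (1 - q y)) * f y + a1 (vadd y e) / 2 * f (vadd y e)
      + a2 (vsub y e) / 2 * f (vsub y e) = f y"
  proof -
    have "(a1 y / 2 + a2 y / 2 + (1 - q y)) * f y + a1 (vadd y e) / 2 * f (vadd y e)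
      + a2 (vsub y e) / 2 * f (vsub y e)
      = f y - (f y * a1 y) / 2 - (f y * a2 y) / 2 + (f (vadd y e) * a1 (vadd y e)) / 2
        + (f (vsub y e) * a2 (vsub y e)) / 2"
      by (simp add: q_def algebra_simps)
    also have "\<dots> = f y" by (simp add: fa1 fa2)
    finally show ?thesis .
  qed
  finally show "pmf (bind_pmf p T) y = pmf p y" by (simp add: f_def)
qed

lemma p_eq: "p = Fk e Rd"
  using Fk_Rd bind_T by simp

lemma Rd_snd: "x \<in> set_pmf Rd \<Longrightarrow> snd x \<le> 1"
  by (auto simp: Rd_def cat_def split: if_splits)

lemma prob_Rd: "measure_pmf.prob Rd {y. snd y = 1} = measure_pmf.expectation p q"
proof -
  have "measure_pmf.prob (cat x) {y. snd y = 1} = q x" for x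
  proof -
    have "measure_pmf.prob (map_pmf (\<lambda>b. if b then (vsub x e, 1::nat) else (x, 1)) (bernoulli_pmf (r x))) {y. snd y = 1} = 1"
      by (simp add: vimage_def measure_pmf.prob_space[simplified] cong: if_cong)
    thus ?thesis using q_bounds[of x]
      by (simp add: cat_def prob_bind_pmf)
  qed
  thus ?thesis by (simp add: Rd_def prob_bind_pmf)
qed


lemma dTV_Rd: "1 - dTV p (map_pmf (\<lambda>x. vadd x e) p) \<le> 2 * measure_pmf.prob Rd {y. snd y = 1}"
proof -
  define A where "A = {x. f (vsub x e) < f x}"
  define B where "B = (\<lambda>x. vadd x e) -` A"
  have "measure_pmf.prob p A - measure_pmf.prob (map_pmf (\<lambda>x. vadd x e) p) A \<le> dTV p (map_pmf (\<lambda>x. vadd x e) p)"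
    using dTV_ge[of p A "map_pmf (\<lambda>x. vadd x e) p"] by simp
  hence 1: "1 - dTV p (map_pmf (\<lambda>x. vadd x e) p) \<le> 1 - measure_pmf.prob p A + measure_pmf.prob p B"
    by (simp add: B_def)
  have iA: "integrable (measure_pmf p) (indicator A :: _ \<Rightarrow> real)"
    by (rule bounded_integrable_pmf[where B=1]) (simp add: indicator_def)
  have iB: "integrable (measure_pmf p) (indicator B :: _ \<Rightarrow> real)"
    by (rule bounded_integrable_pmf[where B=1]) (simp add: indicator_def)
  have "1 - measure_pmf.prob p A + measure_pmf.prob p B
      = measure_pmf.expectation p (\<lambda>x. 1 - indicator A x + indicator B x)"
    using iA iB by (simp add: Bochner_Integration.integral_add Bochner_Integration.integral_diff)
  also have "\<dots> \<le> measure_pmf.expectation p (\<lambda>x. 2 * q x)"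
  proof (rule integral_mono_AE)
    show "integrable (measure_pmf p) (\<lambda>x. 1 - indicator A x + indicator B x :: real)"
      using iA iB by simp
    show "integrable (measure_pmf p) (\<lambda>x. 2 * q x)"
      by (rule bounded_integrable_pmf[where B=2]) (use q_bounds in auto)
    show "AE x in measure_pmf p. 1 - indicator A x + indicator B x \<le> 2 * q x"
    proof (rule AE_pmfI)
      fix x assume "x \<in> set_pmf p"
      hence fx: "f x > 0" using f0[of x] by (auto simp: f_def set_pmf_iff)
      have q2: "2 * q x = nu x / f x + nu (vadd x e) / f x"
        using fx by (simp add: q_def a1_def a2_def field_simps)
      have t1: "1 - indicator A x \<le> nu x / f x"
      proof (cases "x \<in> A")
        case True thus ?thesis using nu_le(3)[of x] fx by simp
      next
        case False
        hence "nu x = f x" by (auto simp: A_def nu_def)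
        thus ?thesis using False fx by simp
      qed
      have t2: "indicator B x \<le> nu (vadd x e) / f x"
      proof (cases "x \<in> B")
        case False thus ?thesis using nu_le(3)[of "vadd x e"] fx by simp
      next
        case True
        hence "f x < f (vadd x e)" by (auto simp: A_def B_def)
        hence "nu (vadd x e) = f x" by (auto simp: nu_def)
        thus ?thesis using True fx by simp
      qed
      show "1 - indicator A x + indicator B x \<le> 2 * q x"
        using t1 t2 q2 by simp
    qed
  qed
  also have "\<dots> = 2 * measure_pmf.prob Rd {y. snd y = 1}"
    using prob_Rd by simp
  finally show ?thesis using 1 by simp
qed

end

lemma decomposition:
  assumes "e \<noteq> (\<lambda>_. 0)"
  shows "\<exists>R. (\<forall>x\<in>set_pmf R. snd x \<le> 1) \<and> p = Fk e R
           \<and> 1 - dTV p (map_pmf (\<lambda>x. vadd x e) p) \<le> 2 * measure_pmf.prob R {y. snd y = 1}"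
proof -
  interpret decomp p e by unfold_locales (rule assms)
  show ?thesis using Rd_snd p_eq dTV_Rd by blast
qed



lemma final_bound:
  fixes S s :: real
  assumes "s > 0" "s \<le> 2 * S"
  shows "4 / sqrt S \<le> 6 / sqrt s"
proof -
  have S0: "S > 0" using assms by simp
  have "4 / sqrt S \<le> 4 / sqrt (s / 2)"
    using assms S0 by (intro divide_left_mono real_sqrt_le_mono) auto
  also have "\<dots> = 4 * sqrt 2 / sqrt s"
    by (simp add: real_sqrt_divide)
  also have "\<dots> \<le> 6 / sqrt s"
  proof -
    have "sqrt 2 \<le> 3 / 2"
      by (rule real_le_lsqrt) (auto simp: power2_eq_square)
    thus ?thesis using assms by (intro divide_right_mono) auto
  qed
  finally show ?thesis .
qed

theorem lemma4p1:
  shows "\<exists>C::real. \<forall>(d::nat) (m::nat) (p :: nat \<Rightarrow> (nat \<Rightarrow> int) pmf).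
     d \<ge> 1 \<longrightarrow>
     (\<forall>i<m. set_pmf (p i) \<subseteq> zvecs d) \<longrightarrow>
     (let u = (\<lambda>i. Min {1 - dTV (p i) (shift_law j (p i)) | j. j < d});
          s = (\<Sum>i<m. u i)
      in s > 0 \<longrightarrow>
         Max {dTV (sum_law m p) (shift_law j (sum_law m p)) | j. j < d} \<le> C / sqrt s)"
proof (intro exI[of _ 6] allI impI)
  fix d m :: nat and p :: "nat \<Rightarrow> (nat \<Rightarrow> int) pmf"
  assume d: "d \<ge> 1"
  define u where "u = (\<lambda>i. Min {1 - dTV (p i) (shift_law j (p i)) | j. j < d})"
  define s where "s = (\<Sum>i<m. u i)"
  show "let u = (\<lambda>i. Min {1 - dTV (p i) (shift_law j (p i)) | j. j < d});
          s = (\<Sum>i<m. u i)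
      in s > 0 \<longrightarrow>
         Max {dTV (sum_law m p) (shift_law j (sum_law m p)) | j. j < d} \<le> 6 / sqrt s"
    unfolding Let_def u_def[symmetric] s_def[symmetric]
  proof
    assume s0: "s > 0"
    have fin: "finite {dTV (sum_law m p) (shift_law j (sum_law m p)) | j. j < d}"
      by (rule finite_image_set) simp
    have "dTV (sum_law m p) (shift_law 0 (sum_law m p)) \<in> {dTV (sum_law m p) (shift_law j (sum_law m p)) | j. j < d}"
      using d by auto
    hence ne: "{dTV (sum_law m p) (shift_law j (sum_law m p)) | j. j < d} \<noteq> {}"
      by blast
    show "Max {dTV (sum_law m p) (shift_law j (sum_law m p)) | j. j < d} \<le> 6 / sqrt s"
    proof (rule Max.boundedI[OF fin ne])
      fix a assume "a \<in> {dTV (sum_law m p) (shift_law j (sum_law m p)) | j. j < d}"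
      then obtain j where j: "j < d" and a: "a = dTV (sum_law m p) (shift_law j (sum_law m p))"
        by auto
      define e where "e = unitvec j"
      have e0: "e \<noteq> (\<lambda>_. 0)"
        by (auto simp: e_def unitvec_def fun_eq_iff)
      have "\<forall>i. \<exists>R. (\<forall>x\<in>set_pmf R. snd x \<le> 1) \<and> p i = Fk e R
           \<and> 1 - dTV (p i) (map_pmf (\<lambda>x. vadd x e) (p i)) \<le> 2 * measure_pmf.prob R {y. snd y = 1}"
        using decomposition[OF e0] by blast
      then obtain R where R: "\<And>i. (\<forall>x\<in>set_pmf (R i). snd x \<le> 1)"
        "\<And>i. p i = Fk e (R i)"
        "\<And>i. 1 - dTV (p i) (map_pmf (\<lambda>x. vadd x e) (p i)) \<le> 2 * measure_pmf.prob (R i) {y. snd y = 1}"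
        by metis
      have ui: "u i \<le> 2 * vR R i" for i
      proof -
        have fin_i: "finite {1 - dTV (p i) (shift_law j (p i)) | j. j < d}"
          by (rule finite_image_set) simp
        have "u i \<le> 1 - dTV (p i) (shift_law j (p i))"
          unfolding u_def by (rule Min_le[OF fin_i]) (use j in auto)
        also have "\<dots> \<le> 2 * vR R i"
          using R(3)[of i] by (simp add: shift_law_def vR_def e_def)
        finally show ?thesis .
      qed
      have sS: "s \<le> 2 * (\<Sum>i<m. vR R i)"
        unfolding s_def sum_distrib_left by (rule sum_mono) (rule ui)
      hence Spos: "(\<Sum>i<m. vR R i) > 0" using s0 by simp
      have "a \<le> 4 / sqrt (\<Sum>i<m. vR R i)"
        unfolding a shift_law_def e_def[symmetric]
        by (rule main_j) (use R Spos in auto)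
      also have "\<dots> \<le> 6 / sqrt s"
        by (rule final_bound[OF s0 sS])
      finally show "a \<le> 6 / sqrt s" .
    qed
  qed
qed


end
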